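(* Let $A\in\mathbb{R}^{n\times n}$ and $b\in\mathbb{R}^n$, and consider the generalized Newton method (GNM) for the absolute value equation $Ax-|x|-b=0$: starting from an initial $x^0\in\mathbb{R}^n$, compute $x^{k+1}=[A-\mathcal{D}(x^k)]^{-1}b$ for $k=0,1,2,\dots$. Suppose that $A$ satisfies either (a) $A-I$ is an $M$-matrix, or (b) $\mathcal{N}(A^\top-I)=\mathrm{span}(v)$ for some vector $v>0$, and $A-I+D$ is an $M$-matrix for every diagonal matrix $D=\mathrm{diag}(d)$ with $d\ge 0$ and $d\neq 0$. If $A$ satisfies (b), assume in addition that $\mathcal{D}(x^0)\neq I$ and $v^\top b<0$. Then GNM converges to an exact solution of $Ax-|x|-b=0$ in at most $2n+2$ iterations.
   Context: For $x\in\mathbb{R}^n$, $|x|=(|x_1|,\dots,|x_n|)^\top$, and $\mathcal{D}(x)=\mathrm{diag}(\mathrm{sign}(x))$, where $\mathrm{sign}(x)$ is the vector whose $i$th component is $-1$, $0$, or $1$ according as $x_i<0$, $x_i=0$, or $x_i>0$. A matrix is a $Z$-matrix if all its off-diagonal entries are $\le 0$; a $Z$-matrix $A$ is an $M$-matrix if $A$ is nonsingular and $A^{-1}\ge 0$ (entrywise). Vector and matrix inequalities are entrywise; $v>0$ means all entries of $v$ are strictly positive. $\mathcal{N}(X)$ denotes the null space of $X$. *)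

theory Defs
  imports "HOL-Analysis.Analysis"
begin

definition vabs :: "real^'n \<Rightarrow> real^'n" where
  "vabs x = (\<chi> i. \<bar>x $ i\<bar>)"

definition diagm :: "real^'n \<Rightarrow> real^'n^'n" where
  "diagm d = (\<chi> i j. if i = j then d $ i else 0)"

definition Dsign :: "real^'n \<Rightarrow> real^'n^'n" where
  "Dsign x = diagm (\<chi> i. sgn (x $ i))"

definition Z_matrix :: "real^'n^'n \<Rightarrow> bool" where
  "Z_matrix A \<longleftrightarrow> (\<forall>i j. i \<noteq> j \<longrightarrow> A $ i $ j \<le> 0)"

definition M_matrix :: "real^'n^'n \<Rightarrow> bool" where
  "M_matrix A \<longleftrightarrow> Z_matrix A \<and> invertible A \<and> (\<forall>i j. matrix_inv A $ i $ j \<ge> 0)"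

definition null_space :: "real^'n^'n \<Rightarrow> (real^'n) set" where
  "null_space X = {y. X *v y = 0}"

definition gnm_seq :: "real^'n^'n \<Rightarrow> real^'n \<Rightarrow> (nat \<Rightarrow> real^'n) \<Rightarrow> bool" where
  "gnm_seq A b x \<longleftrightarrow> (\<forall>k. x (Suc k) = matrix_inv (A - Dsign (x k)) *v b)"

end

theory Submission
  imports Defs
begin

lemma minv:
  fixes B :: "real^'n::finite^'n"
  assumes "invertible B"
  shows "B ** matrix_inv B = mat 1" "matrix_inv B ** B = mat 1"
proof -
  have "B ** matrix_inv B = mat 1 \<and> matrix_inv B ** B = mat 1"
    using assms unfolding invertible_def matrix_inv_def by (rule someI_ex)
  then show "B ** matrix_inv B = mat 1" "matrix_inv B ** B = mat 1" by auto
qed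

lemma minv_vec:
  fixes B :: "real^'n::finite^'n"
  assumes "invertible B"
  shows "B *v (matrix_inv B *v y) = y"
  by (simp add: matrix_vector_mul_assoc minv(1)[OF assms])

lemma diagm_mv: "(diagm d *v y) $ i = d $ i * y $ i"
proof -
  have "(diagm d *v y) $ i = (\<Sum>j\<in>UNIV. (if i = j then d $ i else 0) * y $ j)"
    unfolding matrix_vector_mult_def diagm_def by simp
  also have "\<dots> = (\<Sum>j\<in>UNIV. (if i = j then d $ i * y $ j else 0))"
    by (rule sum.cong) auto
  also have "\<dots> = d $ i * y $ i" by (simp add: sum.delta)
  finally show ?thesis .
qed

lemma mat1_diagm: "(mat 1 :: real^'n::finite^'n) = diagm (\<chi> i. 1)"
  unfolding diagm_def mat_def by (simp add: vec_eq_iff)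

lemma mono_of_Z:
  fixes B :: "real^'n::finite^'n"
  assumes Z: "Z_matrix B" and u: "\<forall>i. u $ i > 0" and Bu: "\<forall>i. (B *v u) $ i > 0"
    and By: "\<forall>i. (B *v y) $ i \<ge> 0"
  shows "\<forall>i. y $ i \<ge> 0"
proof (rule ccontr)
  assume "\<not> (\<forall>i. y $ i \<ge> 0)"
  then obtain i0 where i0: "y $ i0 < 0" by (auto simp: not_le)
  define f where "f j = - y $ j / u $ j" for j
  define t where "t = Max (range f)"
  have "t \<in> range f" unfolding t_def by (rule Max_in) auto
  then obtain i where ti: "t = f i" by auto
  have fle: "f j \<le> t" for j unfolding t_def by (rule Max_ge) auto
  have "f i0 > 0" using i0 u[rule_format, of i0] unfolding f_def by (simp add: divide_neg_pos)
  then have tpos: "t > 0" using fle[of i0] by simp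
  have yi: "y $ i = - t * u $ i" using ti u[rule_format, of i] unfolding f_def by (simp add: field_simps)
  have yj: "y $ j \<ge> - t * u $ j" for j
    using fle[of j] u[rule_format, of j] unfolding f_def by (simp add: field_simps)
  have "(B *v y) $ i = (\<Sum>j\<in>UNIV. B $ i $ j * y $ j)" by (simp add: matrix_vector_mult_def)
  also have "\<dots> \<le> (\<Sum>j\<in>UNIV. B $ i $ j * (- t * u $ j))"
  proof (rule sum_mono)
    fix j
    show "B $ i $ j * y $ j \<le> B $ i $ j * (- t * u $ j)"
    proof (cases "j = i")
      case True then show ?thesis using yi by simp
    next
      case False
      then have "B $ i $ j \<le> 0" using Z unfolding Z_matrix_def by auto
      from mult_left_mono_neg[OF yj[of j] this] show ?thesis by simp
    qed
  qed
  also have "\<dots> = - t * (B *v u) $ i"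
    by (simp add: matrix_vector_mult_def sum_distrib_left algebra_simps)
  also have "\<dots> < 0" using tpos Bu by (simp add: mult_pos_pos)
  finally show False using By by (meson not_le)
qed

lemma inv_of_mono:
  fixes B :: "real^'n::finite^'n"
  assumes m: "\<And>y. \<forall>i. (B *v y) $ i \<ge> 0 \<Longrightarrow> \<forall>i. y $ i \<ge> 0"
  shows "invertible B"
proof -
  have "\<forall>y. B *v y = 0 \<longrightarrow> y = 0"
  proof (intro allI impI)
    fix y assume "B *v y = 0"
    then have "\<forall>i. y $ i \<ge> 0" "\<forall>i. (- y) $ i \<ge> 0"
      using m[of y] m[of "-y"] by (auto simp: matrix_vector_mult_diff_distrib[of B 0 y, simplified])
    then show "y = 0" by (simp add: vec_eq_iff antisym)
  qed
  then show ?thesis using invertible_left_inverse matrix_left_invertible_ker by blast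
qed

lemma mono_of_M:
  fixes B :: "real^'n::finite^'n"
  assumes M: "M_matrix B" and By: "\<forall>i. (B *v y) $ i \<ge> 0"
  shows "\<forall>i. y $ i \<ge> 0"
proof
  fix i
  have inv: "invertible B" using M unfolding M_matrix_def by auto
  have "y = matrix_inv B *v (B *v y)"
    by (simp add: matrix_vector_mul_assoc minv(2)[OF inv])
  then have "y $ i = (matrix_inv B *v (B *v y)) $ i" by (rule arg_cong)
  also have "\<dots> = (\<Sum>j\<in>UNIV. matrix_inv B $ i $ j * (B *v y) $ j)"
    by (simp only: matrix_vector_mult_def vec_lambda_beta)
  also have "\<dots> \<ge> 0" using M By unfolding M_matrix_def by (auto intro!: sum_nonneg)
  finally show "y $ i \<ge> 0" .
qed

lemma M_pos:
  fixes M :: "real^'n::finite^'n"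
  assumes M: "M_matrix M"
  shows "\<exists>u. (\<forall>i. u $ i > 0) \<and> (\<forall>i. (M *v u) $ i > 0)"
proof -
  have inv: "invertible M" and nn: "\<forall>i j. matrix_inv M $ i $ j \<ge> 0" using M unfolding M_matrix_def by auto
  define u where "u = matrix_inv M *v (\<chi> i. 1)"
  have Mu: "M *v u = (\<chi> i. 1)" unfolding u_def by (rule minv_vec[OF inv])
  have "u $ i > 0" for i
  proof -
    have ui: "u $ i = (\<Sum>j\<in>UNIV. matrix_inv M $ i $ j)"
      unfolding u_def by (simp add: matrix_vector_mult_def)
    have "u $ i \<ge> 0" unfolding ui using nn by (auto intro: sum_nonneg)
    moreover have "u $ i \<noteq> 0"
    proof
      assume "u $ i = 0"
      then have z: "\<forall>j. matrix_inv M $ i $ j = 0" unfolding ui using nn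
        by (simp add: sum_nonneg_eq_0_iff)
      have "(matrix_inv M ** M) $ i $ i = 1" by (simp add: minv(2)[OF inv] mat_def)
      moreover have "(matrix_inv M ** M) $ i $ i = 0" by (simp add: matrix_matrix_mult_def z)
      ultimately show False by simp
    qed
    ultimately show ?thesis by simp
  qed
  then show ?thesis using Mu by (intro exI[of _ u]) auto
qed


lemma sgn_mono_r: "(a::real) \<le> b \<Longrightarrow> sgn a \<le> sgn b"
  by (auto simp: sgn_if)

lemma sgn_step: "(a::real) \<le> b \<Longrightarrow> sgn a \<noteq> sgn b \<Longrightarrow> sgn a + 1 \<le> sgn b"
  unfolding sgn_if by (auto split: if_splits)

lemma sgn_abs_ge: "sgn (c::real) * a \<le> \<bar>a\<bar>"
  by (auto simp: sgn_if)

lemma Dsign_mv: "(Dsign z *v y) $ i = sgn (z $ i) * y $ i"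
  unfolding Dsign_def diagm_mv by simp

lemma BD_mv: "((A - Dsign z) *v y) $ i = (A *v y) $ i - sgn (z $ i) * y $ i"
  by (simp add: matrix_vector_mult_diff_rdistrib Dsign_mv)

lemma sum_sgn_bounds:
  fixes z :: "real^'n::finite"
  shows "- real CARD('n) \<le> (\<Sum>i\<in>UNIV. sgn (z $ i))" "(\<Sum>i\<in>UNIV. sgn (z $ i)) \<le> real CARD('n)"
proof -
  have "(\<Sum>i::'n\<in>UNIV. (-1::real)) \<le> (\<Sum>i\<in>UNIV. sgn (z $ i))"
    by (rule sum_mono) (auto simp: sgn_if)
  then show "- real CARD('n) \<le> (\<Sum>i\<in>UNIV. sgn (z $ i))" by simp
  have "(\<Sum>i\<in>UNIV. sgn (z $ i)) \<le> (\<Sum>i::'n\<in>UNIV. (1::real))"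
    by (rule sum_mono) (auto simp: sgn_if)
  then show "(\<Sum>i\<in>UNIV. sgn (z $ i)) \<le> real CARD('n)" by simp
qed

theorem theorem3p1:
  fixes A :: "real^'n::finite^'n" and b :: "real^'n" and x :: "nat \<Rightarrow> real^'n"
  assumes gnm: "gnm_seq A b x"
    and cond: "M_matrix (A - mat 1) \<or>
      (\<exists>v::real^'n. (\<forall>i. v $ i > 0)
         \<and> null_space (transpose A - mat 1) = span {v}
         \<and> (\<forall>d::real^'n. (\<forall>i. d $ i \<ge> 0) \<and> d \<noteq> 0 \<longrightarrow> M_matrix (A - mat 1 + diagm d))
         \<and> Dsign (x 0) \<noteq> mat 1 \<and> v \<bullet> b < 0)"
  shows "(\<forall>k. invertible (A - Dsign (x k))) \<and>
         (\<exists>k \<le> 2 * CARD('n) + 2. A *v x k - vabs (x k) = b)"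
proof -
  have eq: "(A - Dsign (x k)) *v x (Suc k) = b" if "invertible (A - Dsign (x k))" for k
    using gnm minv_vec[OF that] unfolding gnm_seq_def by metis
  have mono: "\<forall>i. y $ i \<ge> 0" if "\<forall>i. ((A - Dsign (x k)) *v y) $ i \<ge> 0" for k y
    using cond
  proof
    assume M: "M_matrix (A - mat 1)"
    obtain u where u: "\<forall>i. u $ i > 0" and Mu: "\<forall>i. ((A - mat 1) *v u) $ i > 0"
      using M_pos[OF M] by blast
    have Z: "Z_matrix (A - Dsign (x k))"
      using M unfolding M_matrix_def Z_matrix_def Dsign_def diagm_def mat_def by simp
    have "((A - Dsign (x k)) *v u) $ i > 0" for i
    proof -
      have "((A - mat 1) *v u) $ i = (A *v u) $ i - u $ i"
        by (simp add: matrix_vector_mult_diff_rdistrib)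
      moreover have "sgn (x k $ i) * u $ i \<le> u $ i" using u by (auto simp: sgn_if)
      ultimately show ?thesis using Mu[rule_format, of i] by (simp add: BD_mv)
    qed
    then show ?thesis using mono_of_Z[OF Z u _ that] by blast
  next
    assume "\<exists>v::real^'n. (\<forall>i. v $ i > 0)
         \<and> null_space (transpose A - mat 1) = span {v}
         \<and> (\<forall>d::real^'n. (\<forall>i. d $ i \<ge> 0) \<and> d \<noteq> 0 \<longrightarrow> M_matrix (A - mat 1 + diagm d))
         \<and> Dsign (x 0) \<noteq> mat 1 \<and> v \<bullet> b < 0"
    then obtain v :: "real^'n" where vpos: "\<forall>i. v $ i > 0"
      and ns: "null_space (transpose A - mat 1) = span {v}"
      and Md: "\<And>d::real^'n. (\<forall>i. d $ i \<ge> 0) \<Longrightarrow> d \<noteq> 0 \<Longrightarrow> M_matrix (A - mat 1 + diagm d)"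
      and D0: "Dsign (x 0) \<noteq> mat 1" and vb: "v \<bullet> b < 0" by blast
    have Mk: "M_matrix (A - Dsign (z::real^'n))" if "Dsign z \<noteq> mat 1" for z
    proof -
      define d where "d = (\<chi> i. 1 - sgn (z $ i))"
      have "A - mat 1 + diagm d = A - Dsign z"
        unfolding d_def Dsign_def diagm_def mat_def by (simp add: vec_eq_iff)
      moreover have "\<forall>i. d $ i \<ge> 0" unfolding d_def by (auto simp: sgn_if)
      moreover have "d \<noteq> 0"
      proof
        assume "d = 0"
        then have "\<forall>i. sgn (z $ i) = 1" unfolding d_def by (simp add: vec_eq_iff)
        then have "Dsign z = mat 1" unfolding Dsign_def diagm_def mat_def by (simp add: vec_eq_iff)
        then show False using that by simp
      qed
      ultimately show ?thesis using Md by metis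
    qed
    have vA: "v v* A = v"
    proof -
      have "v \<in> null_space (transpose A - mat 1)" unfolding ns by (rule span_base) simp
      then have "(transpose A - mat 1) *v v = 0" unfolding null_space_def by simp
      then show ?thesis by (simp add: matrix_vector_mult_diff_rdistrib)
    qed
    have ne: "Dsign (x j) \<noteq> mat 1" for j
    proof (induction j)
      case 0 then show ?case using D0 .
    next
      case (Suc j)
      have inv: "invertible (A - Dsign (x j))" using Mk[OF Suc] unfolding M_matrix_def by simp
      have e: "(A - Dsign (x j)) *v x (Suc j) = b" by (rule eq[OF inv])
      show ?case
      proof
        assume D1: "Dsign (x (Suc j)) = mat 1"
        have xp: "x (Suc j) $ i > 0" for i
        proof -
          have "Dsign (x (Suc j)) $ i $ i = 1" using D1 by (simp add: mat_def)
          then have "sgn (x (Suc j) $ i) = 1" unfolding Dsign_def diagm_def by simp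
          then show ?thesis by (simp add: sgn_if split: if_splits)
        qed
        have "v \<bullet> b = v \<bullet> (A *v x (Suc j)) - v \<bullet> (Dsign (x j) *v x (Suc j))"
          by (subst e[symmetric]) (simp add: matrix_vector_mult_diff_rdistrib inner_diff_right)
        also have "v \<bullet> (A *v x (Suc j)) = v \<bullet> x (Suc j)"
          using dot_lmul_matrix[of v A "x (Suc j)"] vA by simp
        also have "v \<bullet> x (Suc j) - v \<bullet> (Dsign (x j) *v x (Suc j))
            = (\<Sum>i\<in>UNIV. v $ i * ((1 - sgn (x j $ i)) * x (Suc j) $ i))"
          by (simp add: inner_vec_def Dsign_mv sum_subtractf[symmetric] algebra_simps)
        also have "\<dots> \<ge> 0"
          using vpos xp by (intro sum_nonneg mult_nonneg_nonneg) (auto simp: sgn_if less_imp_le)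
        finally show False using vb by simp
      qed
    qed
    show ?thesis using mono_of_M[OF Mk[OF ne[of k]] that] .
  qed
  have inv: "invertible (A - Dsign (x k))" for k
    by (rule inv_of_mono) (rule mono)
  have eqk: "(A - Dsign (x k)) *v x (Suc k) = b" for k by (rule eq[OF inv])
  have step: "x (Suc k) $ i \<le> x (Suc (Suc k)) $ i" for k i
  proof -
    have "\<forall>i. ((A - Dsign (x (Suc k))) *v (x (Suc (Suc k)) - x (Suc k))) $ i \<ge> 0"
    proof
      fix i
      have "((A - Dsign (x (Suc k))) *v (x (Suc (Suc k)) - x (Suc k))) $ i
          = b $ i - ((A *v x (Suc k)) $ i - sgn (x (Suc k) $ i) * x (Suc k) $ i)"
        using eqk[of "Suc k"] by (simp add: matrix_vector_mult_diff_distrib BD_mv)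
      also have "\<dots> = \<bar>x (Suc k) $ i\<bar> - sgn (x k $ i) * x (Suc k) $ i"
        using arg_cong[OF eqk[of k], of "\<lambda>w. w $ i"] by (simp add: BD_mv abs_sgn mult.commute)
      also have "\<dots> \<ge> 0" using sgn_abs_ge by simp
      finally show "((A - Dsign (x (Suc k))) *v (x (Suc (Suc k)) - x (Suc k))) $ i \<ge> 0" .
    qed
    from mono[OF this] show ?thesis by simp
  qed
  have sol: "A *v x (Suc k) - vabs (x (Suc k)) = b" if "\<forall>i. sgn (x (Suc k) $ i) = sgn (x k $ i)" for k
  proof -
    have "(A *v x (Suc k) - vabs (x (Suc k))) $ i = b $ i" for i
      using arg_cong[OF eqk[of k], of "\<lambda>w. w $ i"] that
      by (simp add: BD_mv vabs_def abs_sgn mult.commute)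
    then show ?thesis by (simp add: vec_eq_iff)
  qed
  define n where "n = CARD('n)"
  have "\<exists>k \<le> 2 * n + 2. A *v x k - vabs (x k) = b"
  proof (rule ccontr)
    assume no: "\<not> ?thesis"
    define s where "s k = (\<Sum>i\<in>UNIV. sgn (x k $ i))" for k
    have inc: "s k + 1 \<le> s (Suc k)" if k1: "1 \<le> k" and k2: "k \<le> 2 * n + 1" for k
    proof -
      obtain k' where k': "k = Suc k'" using k1 by (cases k) auto
      have le: "x k $ i \<le> x (Suc k) $ i" for i using step[of k'] k' by simp
      have "\<not> (\<forall>i. sgn (x (Suc k) $ i) = sgn (x k $ i))"
        using sol[of k] no k1 k2 by auto
      then obtain i0 where i0: "sgn (x k $ i0) \<noteq> sgn (x (Suc k) $ i0)" by metis
      have "s k + 1 = (\<Sum>i\<in>UNIV. sgn (x k $ i) + (if i = i0 then 1 else 0))"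
        unfolding s_def by (simp add: sum.distrib)
      also have "\<dots> \<le> s (Suc k)" unfolding s_def
      proof (rule sum_mono)
        fix i
        show "sgn (x k $ i) + (if i = i0 then 1 else 0) \<le> sgn (x (Suc k) $ i)"
          using sgn_step[OF le i0] sgn_mono_r[OF le] by (cases "i = i0") auto
      qed
      finally show ?thesis .
    qed
    have "s 1 + real j \<le> s (1 + j)" if "j \<le> 2 * n + 1" for j
      using that
    proof (induction j)
      case 0 then show ?case by simp
    next
      case (Suc j)
      then have "s 1 + real j \<le> s (1 + j)" by simp
      moreover have "s (1 + j) + 1 \<le> s (Suc (1 + j))" using inc[of "1 + j"] Suc.prems by simp
      ultimately show ?case by simp
    qed
    from this[of "2 * n + 1"] have "s 1 + real (2 * n + 1) \<le> s (2 * n + 2)" by simp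
    moreover have "- real n \<le> s 1" "s (2 * n + 2) \<le> real n"
      unfolding s_def n_def using sum_sgn_bounds by blast+
    ultimately show False by simp
  qed
  then show ?thesis using inv unfolding n_def by blast
qed

end
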